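(* Let $n\geq 1$ and let $H$ be an irreducible subgroup of $SL(n,\mathbb{C})$. For every subgroup $A$ of $Z_n(H)$ one has $Z_{PSL(n,\mathbb{C})}\big(Z_{PSL(n,\mathbb{C})}(A)\big)=A$. In particular, every subgroup of $Z_n(H)$ is itself the centralizer in $PSL(n,\mathbb{C})$ of an irreducible subgroup of $PSL(n,\mathbb{C})$.
   Context: Let $\xi=e^{2\pi i/n}$ and $\pi_n:SL(n,\mathbb{C})\to PSL(n,\mathbb{C})=SL(n,\mathbb{C})/\langle\xi I_n\rangle$ the quotient map. A subgroup $H\le SL(n,\mathbb{C})$ is irreducible if no nonzero proper subspace of $\mathbb{C}^n$ is $H$-invariant; a subgroup of $PSL(n,\mathbb{C})$ is irreducible if its preimage under $\pi_n$ is. $Z_G(S)$ denotes the centralizer of $S$ in $G$, and $Z_n(H)=Z_{PSL(n,\mathbb{C})}(\pi_n(H))$. *)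

theory Defs
  imports "HOL-Analysis.Analysis"
begin

text \<open>n = CARD('n); matrices are complex^'n^'n.\<close>

definition SL :: "(complex^'n^'n) set" where
  "SL = {A. det A = 1}"

definition sl_subgroup :: "(complex^'n^'n) set \<Rightarrow> bool" where
  "sl_subgroup H \<longleftrightarrow> H \<subseteq> SL \<and> mat 1 \<in> H \<and>
     (\<forall>a\<in>H. \<forall>b\<in>H. a ** b \<in> H) \<and> (\<forall>a\<in>H. matrix_inv a \<in> H)"

definition xi :: "'n::finite itself \<Rightarrow> complex" where
  "xi _ = cis (2 * pi / real CARD('n))"

text \<open>The quotient map pi_n: a matrix g is sent to its coset modulo the centre generated by xi I.\<close>
definition pi_n :: "complex^'n^'n \<Rightarrow> (complex^'n^'n) set" where
  "pi_n g = {mat ((xi TYPE('n)) ^ k) ** g | k::nat. True}"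

definition PSL :: "((complex^'n^'n) set) set" where
  "PSL = pi_n ` SL"

definition psl_mult :: "(complex^'n^'n) set \<Rightarrow> (complex^'n^'n) set \<Rightarrow> (complex^'n^'n) set" where
  "psl_mult X Y = {a ** b | a b. a \<in> X \<and> b \<in> Y}"

definition psl_inv :: "(complex^'n^'n) set \<Rightarrow> (complex^'n^'n) set" where
  "psl_inv X = matrix_inv ` X"

definition psl_subgroup :: "((complex^'n^'n) set) set \<Rightarrow> bool" where
  "psl_subgroup A \<longleftrightarrow> A \<subseteq> PSL \<and> pi_n (mat 1) \<in> A \<and>
     (\<forall>X\<in>A. \<forall>Y\<in>A. psl_mult X Y \<in> A) \<and> (\<forall>X\<in>A. psl_inv X \<in> A)"

definition psl_centralizer :: "((complex^'n^'n) set) set \<Rightarrow> ((complex^'n^'n) set) set" where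
  "psl_centralizer S = {X \<in> PSL. \<forall>Y\<in>S. psl_mult X Y = psl_mult Y X}"

definition Zn :: "(complex^'n^'n) set \<Rightarrow> ((complex^'n^'n) set) set" where
  "Zn H = psl_centralizer (pi_n ` H)"

definition irreducible_sl :: "(complex^'n^'n) set \<Rightarrow> bool" where
  "irreducible_sl H \<longleftrightarrow>
     (\<forall>W :: (complex^'n) set. vec.subspace W \<and> W \<noteq> {0} \<and> W \<noteq> UNIV \<longrightarrow>
        \<not> (\<forall>h\<in>H. (\<lambda>v. h *v v) ` W \<subseteq> W))"

definition irreducible_psl :: "((complex^'n^'n) set) set \<Rightarrow> bool" where
  "irreducible_psl A \<longleftrightarrow> irreducible_sl {g \<in> SL. pi_n g \<in> A}"

end

theory Submission
  imports Defs "HOL-Computational_Algebra.Fundamental_Theorem_Algebra"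
begin

definition smul :: "complex \<Rightarrow> complex^'n^'n \<Rightarrow> complex^'n^'n" where
  "smul c M = (\<chi> i j. c * M$i$j)"

lemma smul_nth[simp]: "smul c M $ i $ j = c * M$i$j"
  by (simp add: smul_def)

lemma mat_mult_left: "mat c ** M = smul c (M::complex^'n^'n)"
  by (simp add: vec_eq_iff matrix_matrix_mult_def mat_def if_distrib if_distribR sum.delta cong: if_cong)

lemma mat_mult_right: "M ** mat c = smul c (M::complex^'n^'n)"
  by (simp add: vec_eq_iff matrix_matrix_mult_def mat_def if_distrib if_distribR sum.delta' mult.commute cong: if_cong)

lemma smul_mult_left: "smul c A ** B = smul c (A ** (B::complex^'n^'n))"
  by (simp add: vec_eq_iff matrix_matrix_mult_def sum_distrib_left mult.assoc)

lemma smul_mult_right: "A ** smul c B = smul c (A ** (B::complex^'n^'n))"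
  by (simp add: vec_eq_iff matrix_matrix_mult_def sum_distrib_left mult_ac)

lemma smul_smul[simp]: "smul c (smul d M) = smul (c*d) M"
  by (simp add: vec_eq_iff mult.assoc)

lemma smul_one[simp]: "smul 1 M = M"
  by (simp add: vec_eq_iff)

lemma smul_mat: "smul c (mat d) = (mat (c*d) :: complex^'n^'n)"
  by (simp add: vec_eq_iff mat_def)

lemma det_mat: "det (mat c :: complex^'n^'n) = c ^ CARD('n)"
  by (simp add: det_diagonal mat_def)

lemma det_smul: "det (smul c M) = c ^ CARD('n) * det (M::complex^'n^'n)"
  by (metis mat_mult_left det_mul det_mat)

lemma card_pos: "CARD('n::finite) > 0" by simp

lemma xi_pow: "xi TYPE('n::finite) ^ k = cis (2 * pi * real k / real CARD('n))"
proof -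
  have "xi TYPE('n) ^ k = cis (real k * (2 * pi / real CARD('n)))"
    unfolding xi_def by (rule Complex.DeMoivre)
  also have "real k * (2 * pi / real CARD('n)) = 2 * pi * real k / real CARD('n)" by simp
  finally show ?thesis .
qed

lemma xi_pow_n: "(xi TYPE('n::finite) ^ k) ^ CARD('n) = 1"
proof -
  have "(xi TYPE('n) ^ k) ^ CARD('n) = cis (real CARD('n) * (2 * pi * real k / real CARD('n)))"
    unfolding xi_pow by (rule Complex.DeMoivre)
  also have "real CARD('n) * (2 * pi * real k / real CARD('n)) = real k * (2*pi)" by simp
  also have "cis (real k * (2*pi)) = cis (2*pi) ^ k" by (rule Complex.DeMoivre[symmetric])
  also have "cis (2*pi) = 1" by (simp add: complex_eq_iff)
  finally show ?thesis by simp
qed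

lemma xi_n: "xi TYPE('n::finite) ^ CARD('n) = 1"
  using xi_pow_n[of 1] by simp

lemma xi_nz[simp]: "xi TYPE('n::finite) \<noteq> 0"
  by (simp add: xi_def)

lemma root_is_xi_pow:
  assumes "(c::complex) ^ CARD('n::finite) = 1"
  shows "\<exists>k. c = xi TYPE('n) ^ k"
proof -
  have "c \<in> {z. z ^ CARD('n) = 1}" using assms by simp
  then obtain k where "c = cis (2 * pi * real k / real CARD('n))"
    using Complex.bij_betw_roots_unity[of "CARD('n)"] by (auto simp: bij_betw_def)
  thus ?thesis by (metis xi_pow)
qed

lemma nth_root_exists:
  assumes "(w::complex) \<noteq> 0" "n > 0"
  shows "\<exists>c. c ^ n = w"
proof -
  have "1 \<in> {z::complex. z ^ n = 1}" by simp
  from bij_betw_imp_surj_on[OF bij_betw_nth_root_unity[OF assms]] this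
  show ?thesis by blast
qed

lemma xi_pow_inv: "xi TYPE('n::finite) ^ k * xi TYPE('n) ^ (k * (CARD('n) - 1)) = 1"
proof -
  have "xi TYPE('n) ^ k * xi TYPE('n) ^ (k * (CARD('n) - 1)) = (xi TYPE('n) ^ k) ^ CARD('n)"
    by (metis (no_types, lifting) One_nat_def Suc_pred card_pos mult.commute power_Suc power_mult)
  thus ?thesis by (simp add: xi_pow_n)
qed

lemma inv_facts:
  fixes a :: "complex^'n^'n"
  assumes "invertible a"
  shows "a ** matrix_inv a = mat 1" "matrix_inv a ** a = mat 1"
proof -
  have "\<exists>A'. a ** A' = mat 1 \<and> A' ** a = mat 1" using assms by (simp add: invertible_def)
  from someI_ex[OF this] show "a ** matrix_inv a = mat 1" "matrix_inv a ** a = mat 1"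
    by (simp_all add: matrix_inv_def)
qed

lemma matrix_inv_unique:
  fixes a b :: "complex^'n^'n"
  assumes "a ** b = mat 1"
  shows "matrix_inv a = b"
proof -
  have inv: "invertible a" using assms invertible_right_inverse by blast
  have "b ** a = mat 1" using assms matrix_left_right_inverse by blast
  have "matrix_inv a = matrix_inv a ** (a ** b)" using assms by simp
  also have "\<dots> = b" by (simp add: matrix_mul_assoc inv_facts[OF inv])
  finally show ?thesis .
qed

lemma SL_invertible: "a \<in> SL \<Longrightarrow> invertible a"
  by (simp add: SL_def invertible_det_nz)

lemma SL_mult: "a \<in> SL \<Longrightarrow> b \<in> SL \<Longrightarrow> a ** b \<in> SL"
  by (simp add: SL_def det_mul)

lemma SL_inv: "a \<in> SL \<Longrightarrow> matrix_inv a \<in> SL"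
proof -
  assume a: "a \<in> SL"
  have "det (a ** matrix_inv a) = 1" using inv_facts[OF SL_invertible[OF a]] by simp
  with a show ?thesis by (simp add: SL_def det_mul)
qed

lemma SL_one: "mat 1 \<in> SL" by (simp add: SL_def)

lemma SL_nz: "a \<in> SL \<Longrightarrow> a \<noteq> 0"
  by (auto simp: SL_def simp flip: mat_0)

lemma SL_xi: "a \<in> SL \<Longrightarrow> smul (xi TYPE('n) ^ k) (a::complex^'n^'n) \<in> SL"
  by (simp add: SL_def det_smul xi_pow_n)

lemma inv_mult: "a \<in> SL \<Longrightarrow> b \<in> SL \<Longrightarrow> matrix_inv (a ** b) = matrix_inv b ** matrix_inv a"
  apply (rule matrix_inv_unique)
  by (metis (no_types, lifting) SL_invertible inv_facts(1) matrix_mul_assoc matrix_mul_rid)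

lemma inv_smul: "invertible a \<Longrightarrow> c \<noteq> 0 \<Longrightarrow> matrix_inv (smul c a) = smul (inverse c) (matrix_inv (a::complex^'n^'n))"
  apply (rule matrix_inv_unique)
  by (simp add: smul_mult_left smul_mult_right inv_facts smul_mat)

lemma mem_pi: "b \<in> pi_n a \<longleftrightarrow> (\<exists>k. b = smul (xi TYPE('n) ^ k) (a::complex^'n^'n))"
  by (simp add: pi_n_def mat_mult_left)

lemma pi_self: "a \<in> pi_n a"
  unfolding mem_pi by (rule exI[of _ 0]) simp

lemma pi_eq_iff: "pi_n a = pi_n b \<longleftrightarrow> (\<exists>k. b = smul (xi TYPE('n) ^ k) (a::complex^'n^'n))"
proof
  assume "pi_n a = pi_n b"
  then show "\<exists>k. b = smul (xi TYPE('n) ^ k) a" using pi_self[of b] mem_pi by metis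
next
  assume "\<exists>k. b = smul (xi TYPE('n) ^ k) a"
  then obtain k where k: "b = smul (xi TYPE('n) ^ k) a" by blast
  show "pi_n a = pi_n b"
  proof (rule set_eqI)
    fix x
    show "x \<in> pi_n a \<longleftrightarrow> x \<in> pi_n b"
    proof
      assume "x \<in> pi_n a"
      then obtain j where j: "x = smul (xi TYPE('n) ^ j) a" by (auto simp: mem_pi)
      have "x = smul (xi TYPE('n) ^ (j + k * (CARD('n) - 1))) b"
        using xi_pow_inv[where 'n='n, of k] by (simp add: j k power_add mult_ac)
      then show "x \<in> pi_n b" by (auto simp: mem_pi)
    next
      assume "x \<in> pi_n b"
      then obtain j where j: "x = smul (xi TYPE('n) ^ j) b" by (auto simp: mem_pi)
      have "x = smul (xi TYPE('n) ^ (j + k)) a"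
        by (simp add: j k power_add mult_ac)
      then show "x \<in> pi_n a" by (auto simp: mem_pi)
    qed
  qed
qed

lemma pi_mult: "psl_mult (pi_n a) (pi_n b) = pi_n (a ** (b::complex^'n^'n))"
proof (rule set_eqI)
  fix x
  show "x \<in> psl_mult (pi_n a) (pi_n b) \<longleftrightarrow> x \<in> pi_n (a ** b)"
  proof
    assume "x \<in> psl_mult (pi_n a) (pi_n b)"
    then obtain j k where "x = smul (xi TYPE('n) ^ j) a ** smul (xi TYPE('n) ^ k) b"
      by (auto simp: psl_mult_def mem_pi)
    then have "x = smul (xi TYPE('n) ^ (j+k)) (a ** b)"
      by (simp add: smul_mult_left smul_mult_right power_add mult_ac)
    then show "x \<in> pi_n (a ** b)" by (auto simp: mem_pi)
  next
    assume "x \<in> pi_n (a ** b)"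
    then obtain k where "x = smul (xi TYPE('n) ^ k) a ** smul (xi TYPE('n) ^ 0) b"
      by (auto simp: mem_pi smul_mult_left)
    then show "x \<in> psl_mult (pi_n a) (pi_n b)"
      unfolding psl_mult_def mem_pi by blast
  qed
qed

lemma pi_inv: "invertible a \<Longrightarrow> psl_inv (pi_n a) = pi_n (matrix_inv (a::complex^'n^'n))"
proof (rule set_eqI)
  fix x assume inv: "invertible a"
  show "x \<in> psl_inv (pi_n a) \<longleftrightarrow> x \<in> pi_n (matrix_inv a)"
  proof
    assume "x \<in> psl_inv (pi_n a)"
    then obtain k where "x = matrix_inv (smul (xi TYPE('n) ^ k) a)"
      by (auto simp: psl_inv_def mem_pi)
    then have "x = smul (inverse (xi TYPE('n) ^ k)) (matrix_inv a)"
      using inv by (simp add: inv_smul)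
    also have "inverse (xi TYPE('n) ^ k) = xi TYPE('n) ^ (k * (CARD('n) - 1))"
      using xi_pow_inv[where 'n='n, of k] by (metis inverse_unique)
    finally show "x \<in> pi_n (matrix_inv a)" by (auto simp: mem_pi)
  next
    assume "x \<in> pi_n (matrix_inv a)"
    then obtain k where k: "x = smul (xi TYPE('n) ^ k) (matrix_inv a)" by (auto simp: mem_pi)
    have "inverse (xi TYPE('n) ^ (k * (CARD('n) - 1))) = xi TYPE('n) ^ k"
      using xi_pow_inv[where 'n='n, of k] by (metis inverse_unique mult.commute)
    then have "x = matrix_inv (smul (xi TYPE('n) ^ (k * (CARD('n) - 1))) a)"
      using inv by (simp add: inv_smul k)
    then show "x \<in> psl_inv (pi_n a)"
      unfolding psl_inv_def by (metis image_eqI mem_pi)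
  qed
qed

lemma pi_comm: "psl_mult (pi_n a) (pi_n b) = psl_mult (pi_n b) (pi_n a) \<longleftrightarrow>
   (\<exists>k. b ** a = smul (xi TYPE('n) ^ k) (a ** (b::complex^'n^'n)))"
  by (simp add: pi_mult pi_eq_iff)

definition cpoly :: "complex^'n^'n \<Rightarrow> complex poly" where
  "cpoly A = (\<Sum>p\<in>{p. p permutes (UNIV::'n set)}. of_int (sign p) *
      (\<Prod>i\<in>UNIV. [: A$i$(p i), (if p i = i then -1 else 0) :]))"

lemma poly_cpoly: "poly (cpoly A) x = det (A - mat x)"
  unfolding cpoly_def det_def poly_sum
  by (intro sum.cong refl) (auto simp: poly_prod mat_def intro!: prod.cong)

lemma coeff_cpoly: "coeff (cpoly (A::complex^'n^'n)) CARD('n) = (-1) ^ CARD('n)"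
proof -
  let ?q = "\<lambda>p i. [: A$i$(p i), (if p i = i then -1 else (0::complex)) :]"
  let ?P = "{p. p permutes (UNIV::'n set)}"
  have fin: "finite ?P" by (simp add: finite_permutations)
  have other: "coeff (of_int (sign p) * (\<Prod>i\<in>UNIV. ?q p i)) CARD('n) = 0"
    if p: "p \<in> ?P" "p \<noteq> id" for p
  proof -
    obtain i0 where i0: "p i0 \<noteq> i0" using p(2) by (metis eq_id_iff)
    have "degree (\<Prod>i\<in>UNIV. ?q p i) \<le> (\<Sum>i\<in>UNIV. degree (?q p i))"
      using degree_prod_sum_le[of UNIV "?q p"] by (simp add: o_def)
    also have "\<dots> = degree (?q p i0) + (\<Sum>i\<in>UNIV - {i0}. degree (?q p i))"
      by (simp add: sum.remove)
    also have "\<dots> \<le> 0 + (\<Sum>i\<in>UNIV - {i0}. 1)"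
      using i0 by (intro add_mono sum_mono) auto
    also have "\<dots> < CARD('n)" by (simp add: card_Diff_singleton)
    finally have "degree (\<Prod>i\<in>UNIV. ?q p i) < CARD('n)" .
    then have "degree (of_int (sign p) * (\<Prod>i\<in>UNIV. ?q p i)) < CARD('n)"
      by (metis (no_types, lifting) degree_mult_le degree_of_int add_0 order.strict_trans1)
    then show ?thesis by (simp add: coeff_eq_0)
  qed
  have idterm: "coeff (of_int (sign (id::'n\<Rightarrow>'n)) * (\<Prod>i\<in>UNIV. ?q id i)) CARD('n) = (-1) ^ CARD('n)"
  proof -
    have nz: "\<forall>i\<in>UNIV. ?q id i \<noteq> 0" by simp
    have "degree (\<Prod>i\<in>UNIV. ?q id i) = CARD('n)"
      using degree_prod_eq_sum_degree[OF nz] by simp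
    moreover have "lead_coeff (\<Prod>i\<in>UNIV. ?q id i) = (-1) ^ CARD('n)"
      by (simp add: lead_coeff_prod)
    ultimately show ?thesis by (simp add: sign_id)
  qed
  have "coeff (cpoly A) CARD('n) = (\<Sum>p\<in>?P. coeff (of_int (sign p) * (\<Prod>i\<in>UNIV. ?q p i)) CARD('n))"
    unfolding cpoly_def coeff_sum ..
  also have "\<dots> = coeff (of_int (sign (id::'n\<Rightarrow>'n)) * (\<Prod>i\<in>UNIV. ?q id i)) CARD('n)"
  proof -
    have idP: "id \<in> ?P" by (simp add: permutes_id)
    show ?thesis
      using fin other idP by (simp add: sum.remove[OF fin idP] sum.neutral)
  qed
  finally show ?thesis using idterm by simp
qed

lemma eigen_exists:
  fixes A :: "complex^'n^'n"
  shows "\<exists>z v. v \<noteq> 0 \<and> A *v v = z *s v"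
proof -
  have "coeff (cpoly A) CARD('n) \<noteq> 0" by (simp add: coeff_cpoly)
  then have "degree (cpoly A) \<noteq> 0" using le_degree[of "cpoly A" "CARD('n)"] card_pos[where 'n='n] by linarith
  then have "\<not> constant (poly (cpoly A))" by (simp add: constant_degree)
  then obtain z where "poly (cpoly A) z = 0" using fundamental_theorem_of_algebra by blast
  then have "det (A - mat z) = 0" by (simp add: poly_cpoly)
  then have "\<not> (\<exists>B. B ** (A - mat z) = mat 1)"
    using invertible_det_nz invertible_left_inverse by blast
  then obtain v where v: "(A - mat z) *v v = 0" "v \<noteq> 0"
    using matrix_left_invertible_ker by blast
  have "mat z *v v = z *s v"
    by (simp add: vec_eq_iff matrix_vector_mult_def mat_def if_distrib if_distribR sum.delta cong: if_cong)
  with v show ?thesis by (metis eq_iff_diff_eq_0 matrix_vector_mult_diff_rdistrib)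
qed

lemma mv_scale: "A *v (c *s v) = c *s (A *v (v::complex^'n))"
  by (simp add: vec_eq_iff matrix_vector_mult_def sum_distrib_left mult_ac)

lemma mat_mv: "mat z *v v = z *s (v::complex^'n)"
  by (simp add: vec_eq_iff matrix_vector_mult_def mat_def if_distrib if_distribR sum.delta cong: if_cong)

lemma schur:
  fixes x :: "complex^'n^'n"
  assumes irr: "irreducible_sl H" and comm: "\<And>h. h \<in> H \<Longrightarrow> x ** h = h ** x"
  shows "\<exists>c. x = mat c"
proof -
  obtain z v where v: "v \<noteq> 0" "x *v v = z *s v" using eigen_exists by blast
  define W where "W = {w. x *v w = z *s w}"
  have sub: "vec.subspace W"
    unfolding vec.subspace_def W_def
    by (auto simp: matrix_vector_right_distrib mv_scale vector_space_over_itself.scale_left_commute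
        algebra_simps)
  have nz: "W \<noteq> {0}" using v W_def by auto
  have inv: "\<forall>h\<in>H. (\<lambda>w. h *v w) ` W \<subseteq> W"
  proof (intro ballI subsetI)
    fix h y assume h: "h \<in> H" and "y \<in> (\<lambda>w. h *v w) ` W"
    then obtain w where w: "w \<in> W" "y = h *v w" by blast
    have "x *v y = (x ** h) *v w" by (simp add: w matrix_vector_mul_assoc)
    also have "\<dots> = (h ** x) *v w" using comm h by simp
    also have "\<dots> = z *s y" using w by (simp add: W_def matrix_vector_mul_assoc[symmetric] mv_scale)
    finally show "y \<in> W" by (simp add: W_def)
  qed
  have "W = UNIV" using irr sub nz inv unfolding irreducible_sl_def by blast
  then have "\<forall>w. x *v w = mat z *v w" by (auto simp: W_def mat_mv)
  then show ?thesis using matrix_eq by blast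
qed

lemma sum_nth2: "(\<Sum>i\<in>I. (M i :: 'a::comm_monoid_add^'n^'m)) $ p $ q = (\<Sum>i\<in>I. M i $ p $ q)"
  by (simp add: sum_component)

lemma sum_mult_right: "(\<Sum>i\<in>I. M i) ** (B::complex^'n^'n) = (\<Sum>i\<in>I. M i ** B)"
  unfolding vec_eq_iff matrix_matrix_mult_def
  apply (simp add: sum_nth2 sum_distrib_right)
  apply (intro allI)
  apply (rule sum.swap)
  done

lemma sum_mult_left: "(B::complex^'n^'n) ** (\<Sum>i\<in>I. M i) = (\<Sum>i\<in>I. B ** M i)"
  unfolding vec_eq_iff matrix_matrix_mult_def
  apply (simp add: sum_nth2 sum_distrib_left)
  apply (intro allI)
  apply (rule sum.swap)
  done

lemma smul_sum: "smul a (\<Sum>i\<in>I. M i) = (\<Sum>i\<in>I. smul a (M i :: complex^'n^'n))"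
  by (simp add: vec_eq_iff sum_nth2 sum_distrib_left)

lemma smul_eq_cancel: "smul c M = smul d M \<Longrightarrow> M \<noteq> 0 \<Longrightarrow> c = (d::complex)"
proof -
  assume a: "smul c M = smul d M" "M \<noteq> 0"
  then obtain p q where "M $ p $ q \<noteq> 0" by (metis vec_eq_iff zero_index)
  moreover have "c * M $ p $ q = d * M $ p $ q" using a(1) by (metis smul_nth)
  ultimately show ?thesis by simp
qed

lemma smul_zero_iff: "smul c M = 0 \<longleftrightarrow> c = 0 \<or> M = (0::complex^'n^'n)"
  by (auto simp: vec_eq_iff)

lemma smul_0[simp]: "smul c 0 = 0"
  by (simp add: vec_eq_iff)

definition hasChr :: "(complex^'n^'n) set \<Rightarrow> complex^'n^'n \<Rightarrow> (complex^'n^'n \<Rightarrow> complex) \<Rightarrow> bool" where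
  "hasChr H x \<gamma> \<longleftrightarrow> (\<forall>h\<in>H. x ** h = smul (\<gamma> h) (h ** x))"

lemma dedekind_aux:
  fixes f :: "'i \<Rightarrow> complex^'n^'n"
  assumes HSL: "H \<subseteq> SL"
  shows "\<And>I c. card ((\<lambda>i. restrict (\<gamma> i) H) ` I) = N \<Longrightarrow> finite I \<Longrightarrow>
     (\<forall>i\<in>I. hasChr H (f i) (\<gamma> i)) \<Longrightarrow> (\<Sum>i\<in>I. smul (c i) (f i)) = 0 \<Longrightarrow>
     (\<Sum>i\<in>{i\<in>I. restrict (\<gamma> i) H = d}. smul (c i) (f i)) = 0"
proof (induction N rule: less_induct)
  case (less N I c)
  let ?r = "\<lambda>i. restrict (\<gamma> i) H"
  show ?case
  proof (cases "\<exists>i1\<in>I. ?r i1 \<noteq> d")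
    case False
    then have eq: "{i\<in>I. ?r i = d} = I" by auto
    show ?thesis unfolding eq using less.prems(4) .
  next
    case True
    then obtain i1 where i1: "i1 \<in> I" "?r i1 \<noteq> d" by blast
    show ?thesis
    proof (cases "d \<in> ?r ` I")
      case False
      then have eq: "{i\<in>I. ?r i = d} = {}" by auto
      show ?thesis unfolding eq by (rule sum.empty)
    next
      case True
      then obtain j where j: "j \<in> I" "?r j = d" by blast
      then obtain h where h: "h \<in> H" "\<gamma> i1 h \<noteq> \<gamma> j h"
        using i1 by (metis restrict_ext)
      have hinv: "invertible h" using h HSL SL_invertible by blast
      define e where "e = \<gamma> i1 h"
      define c' where "c' i = c i * (\<gamma> i h - e)" for i
      have s1: "(\<Sum>i\<in>I. smul (c i * \<gamma> i h) (f i)) = 0"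
      proof -
        have "h ** (\<Sum>i\<in>I. smul (c i * \<gamma> i h) (f i)) = (\<Sum>i\<in>I. smul (c i) (f i ** h))"
          unfolding sum_mult_left
        proof (intro sum.cong refl)
          fix i assume "i \<in> I"
          then have "f i ** h = smul (\<gamma> i h) (h ** f i)" using less.prems(3) h(1) by (auto simp: hasChr_def)
          then show "h ** smul (c i * \<gamma> i h) (f i) = smul (c i) (f i ** h)"
            by (simp add: smul_mult_right mult.commute)
        qed
        also have "\<dots> = (\<Sum>i\<in>I. smul (c i) (f i)) ** h"
          by (simp add: sum_mult_right smul_mult_left)
        also have "\<dots> = 0" using less.prems(4) by simp
        finally have "h ** (\<Sum>i\<in>I. smul (c i * \<gamma> i h) (f i)) = 0" .
        then have "matrix_inv h ** (h ** (\<Sum>i\<in>I. smul (c i * \<gamma> i h) (f i))) = 0" by simp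
        then show ?thesis by (simp add: matrix_mul_assoc inv_facts[OF hinv])
      qed
      have s2: "(\<Sum>i\<in>I. smul (c' i) (f i)) = 0"
      proof -
        have "(\<Sum>i\<in>I. smul (c' i) (f i)) = (\<Sum>i\<in>I. smul (c i * \<gamma> i h) (f i)) - smul e (\<Sum>i\<in>I. smul (c i) (f i))"
          by (simp add: vec_eq_iff sum_nth2 c'_def smul_sum algebra_simps sum_subtractf)
        then show ?thesis using s1 less.prems(4) by (simp add: smul_sum)
      qed
      define I' where "I' = {i\<in>I. ?r i \<noteq> ?r i1}"
      have fI': "finite I'" using less.prems(2) by (simp add: I'_def)
      have s3: "(\<Sum>i\<in>I'. smul (c' i) (f i)) = 0"
      proof -
        have "(\<Sum>i\<in>I. smul (c' i) (f i)) = (\<Sum>i\<in>I'. smul (c' i) (f i))"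
        proof (rule sum.mono_neutral_right[OF less.prems(2)])
          show "I' \<subseteq> I" by (auto simp: I'_def)
          show "\<forall>i\<in>I - I'. smul (c' i) (f i) = 0"
          proof
            fix i assume "i \<in> I - I'"
            then have "?r i = ?r i1" by (auto simp: I'_def)
            then have "\<gamma> i h = e" using h(1) e_def by (metis restrict_apply')
            then show "smul (c' i) (f i) = 0" by (simp add: c'_def smul_zero_iff)
          qed
        qed
        then show ?thesis using s2 by simp
      qed
      have lt: "card (?r ` I') < N"
      proof -
        have "?r ` I' \<subseteq> ?r ` I - {?r i1}" by (auto simp: I'_def)
        also have "\<dots> \<subset> ?r ` I" using i1 by blast
        finally have "?r ` I' \<subset> ?r ` I" .
        moreover have "finite (?r ` I)" using less.prems(2) by simp
        ultimately have "card (?r ` I') < card (?r ` I)" by (rule psubset_card_mono[rotated])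
        then show ?thesis using less.prems(1) by simp
      qed
      have IH: "(\<Sum>i\<in>{i\<in>I'. ?r i = d}. smul (c' i) (f i)) = 0"
      proof -
        have hyp: "\<forall>i\<in>I'. hasChr H (f i) (\<gamma> i)" using less.prems(3) by (auto simp: I'_def)
        show ?thesis using less.IH[OF lt refl fI' hyp s3] .
      qed
      have eqset: "{i\<in>I'. ?r i = d} = {i\<in>I. ?r i = d}" using i1 by (auto simp: I'_def)
      have dh: "\<gamma> j h - e \<noteq> 0" using h e_def by simp
      have "(\<Sum>i\<in>{i\<in>I. ?r i = d}. smul (c' i) (f i)) = smul (\<gamma> j h - e) (\<Sum>i\<in>{i\<in>I. ?r i = d}. smul (c i) (f i))"
        unfolding smul_sum
      proof (intro sum.cong refl)
        fix i assume "i \<in> {i\<in>I. ?r i = d}"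
        then have "\<gamma> i h = \<gamma> j h" using j h(1) by (metis (mono_tags, lifting) mem_Collect_eq restrict_apply')
        then show "smul (c' i) (f i) = smul (\<gamma> j h - e) (smul (c i) (f i))" by (simp add: c'_def mult.commute)
      qed
      moreover have "(\<Sum>i\<in>{i\<in>I. ?r i = d}. smul (c' i) (f i)) = 0"
        using IH unfolding eqset .
      ultimately have "smul (\<gamma> j h - e) (\<Sum>i\<in>{i\<in>I. ?r i = d}. smul (c i) (f i)) = 0"
        by (simp only:)
      then have "\<gamma> j h - e = 0 \<or> (\<Sum>i\<in>{i\<in>I. ?r i = d}. smul (c i) (f i)) = 0"
        by (simp only: smul_zero_iff)
      then show ?thesis using dh by blast
    qed
  qed
qed

lemma dedekind:
  fixes f :: "'i \<Rightarrow> complex^'n^'n"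
  assumes "H \<subseteq> SL" "finite I" "\<forall>i\<in>I. hasChr H (f i) (\<gamma> i)" "(\<Sum>i\<in>I. smul (c i) (f i)) = 0"
  shows "(\<Sum>i\<in>{i\<in>I. \<forall>h\<in>H. \<gamma> i h = \<delta> h}. smul (c i) (f i)) = 0"
proof -
  have "{i\<in>I. \<forall>h\<in>H. \<gamma> i h = \<delta> h} = {i\<in>I. restrict (\<gamma> i) H = restrict \<delta> H}"
    by (auto simp: restrict_def fun_eq_iff)
  then show ?thesis using dedekind_aux[OF assms(1) refl assms(2-4)] by simp
qed

definition chr :: "complex^'n^'n \<Rightarrow> complex^'n^'n \<Rightarrow> complex" where
  "chr x h = (SOME c. x ** h = smul c (h ** x))"

lemma chr_spec: "\<exists>c. x ** h = smul c (h ** x) \<Longrightarrow> x ** h = smul (chr x h) (h ** x)"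
  unfolding chr_def by (rule someI_ex)

lemma chr_unique: "x \<in> SL \<Longrightarrow> h \<in> SL \<Longrightarrow> x ** h = smul c (h ** x) \<Longrightarrow> chr x h = c"
  by (metis SL_mult SL_nz chr_spec smul_eq_cancel)

lemma chr_nz: "x \<in> SL \<Longrightarrow> h \<in> SL \<Longrightarrow> x ** h = smul c (h ** x) \<Longrightarrow> chr x h \<noteq> 0"
  by (metis SL_mult SL_nz chr_unique smul_zero_iff)

lemma proj_to_chr:
  assumes "h ** a = smul (xi TYPE('n) ^ k) (a ** (h::complex^'n^'n))"
  shows "a ** h = smul (xi TYPE('n) ^ (k * (CARD('n) - 1))) (h ** a)"
proof -
  have "smul (xi TYPE('n) ^ (k * (CARD('n) - 1))) (h ** a) =
      smul (xi TYPE('n) ^ k * xi TYPE('n) ^ (k * (CARD('n) - 1))) (a ** h)"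
    by (simp add: assms mult.commute)
  then show ?thesis using xi_pow_inv[where 'n='n, of k] by simp
qed

lemma hasChr_mult:
  assumes "hasChr H x \<alpha>" "hasChr H y \<beta>"
  shows "hasChr H (x ** y) (\<lambda>h. \<alpha> h * \<beta> h)"
  unfolding hasChr_def
proof
  fix h assume h: "h \<in> H"
  have "x ** y ** h = x ** (y ** h)" by (simp add: matrix_mul_assoc)
  also have "\<dots> = smul (\<beta> h) ((x ** h) ** y)"
    using assms(2) h by (simp add: hasChr_def smul_mult_right matrix_mul_assoc)
  also have "\<dots> = smul (\<alpha> h * \<beta> h) (h ** (x ** y))"
    using assms(1) h by (simp add: hasChr_def smul_mult_left matrix_mul_assoc mult.commute)
  finally show "x ** y ** h = smul (\<alpha> h * \<beta> h) (h ** (x ** y))" .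
qed

lemma hasChr_inv:
  assumes x: "x \<in> SL" and "hasChr H x \<alpha>" "\<forall>h\<in>H. \<alpha> h \<noteq> 0"
  shows "hasChr H (matrix_inv x) (\<lambda>h. inverse (\<alpha> h))"
  unfolding hasChr_def
proof
  fix h assume h: "h \<in> H"
  let ?y = "matrix_inv x"
  have xi: "x ** ?y = mat 1" "?y ** x = mat 1" using inv_facts SL_invertible[OF x] by auto
  have e: "x ** h = smul (\<alpha> h) (h ** x)" using assms(2) h by (simp add: hasChr_def)
  have "h ** ?y = ?y ** (x ** h) ** ?y" by (simp add: matrix_mul_assoc xi)
  also have "\<dots> = smul (\<alpha> h) (?y ** h)" 
    by (simp add: e smul_mult_left smul_mult_right matrix_mul_assoc[symmetric] xi)
  finally have "h ** ?y = smul (\<alpha> h) (?y ** h)" .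
  then have "smul (inverse (\<alpha> h)) (h ** ?y) = ?y ** h"
    using assms(3) h by simp
  then show "?y ** h = smul (inverse (\<alpha> h)) (h ** ?y)" by simp
qed

lemma hasChr_chr:
  assumes "x \<in> SL" "H \<subseteq> SL" "\<forall>h\<in>H. \<exists>c. x ** h = smul c (h ** x)"
  shows "hasChr H x (chr x)" "\<forall>h\<in>H. chr x h \<noteq> 0"
  using assms chr_spec chr_nz unfolding hasChr_def by blast+

lemma hasChr_chr_eq:
  assumes "x \<in> SL" "H \<subseteq> SL" "hasChr H x \<alpha>" "h \<in> H"
  shows "chr x h = \<alpha> h"
  using assms chr_unique unfolding hasChr_def by blast

lemma flat_lin:
  fixes M :: "'i \<Rightarrow> complex^'n^'n"
  shows "(\<Sum>i\<in>T. u i *s ((\<chi> p. M i $ fst p $ snd p) :: complex^('n \<times> 'n))) =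
     (\<chi> p. (\<Sum>i\<in>T. smul (u i) (M i)) $ fst p $ snd p)"
  by (simp add: vec_eq_iff sum_component sum_nth2)

lemma flat_inj: "inj (\<lambda>M::complex^'n^'n. (\<chi> p. M $ fst p $ snd p) :: complex^('n \<times> 'n))"
proof (rule injI)
  fix M N :: "complex^'n^'n"
  assume "(\<chi> p. M $ fst p $ snd p) = ((\<chi> p. N $ fst p $ snd p) :: complex^('n \<times> 'n))"
  then have "\<forall>p::'n\<times>'n. M $ fst p $ snd p = N $ fst p $ snd p" by (simp add: vec_eq_iff)
  then show "M = N" by (simp add: vec_eq_iff)
qed

lemma flat_zero: "((\<chi> p. M $ fst p $ snd p) :: complex^('n \<times> 'n)) = 0 \<Longrightarrow> (M::complex^'n^'n) = 0"
proof -
  assume a: "((\<chi> p. M $ fst p $ snd p) :: complex^('n \<times> 'n)) = 0"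
  have "((\<chi> p. (0::complex^'n^'n) $ fst p $ snd p) :: complex^('n \<times> 'n)) = 0" by (simp add: vec_eq_iff)
  with a have "((\<chi> p. M $ fst p $ snd p) :: complex^('n \<times> 'n)) = (\<chi> p. (0::complex^'n^'n) $ fst p $ snd p)"
    by (simp only:)
  then show ?thesis by (rule injD[OF flat_inj])
qed

locale thm_setup =
  fixes H :: "(complex^'n^'n) set" and A :: "((complex^'n^'n) set) set"
  assumes sgH: "sl_subgroup H" and irr: "irreducible_sl H"
    and sgA: "psl_subgroup A" and AZ: "A \<subseteq> Zn H"
begin

definition "Ah = {a \<in> SL. pi_n a \<in> A}"

lemma HSL: "H \<subseteq> SL" using sgH by (simp add: sl_subgroup_def)

lemma Ah_SL: "a \<in> Ah \<Longrightarrow> a \<in> SL" by (simp add: Ah_def)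

lemma Ah_one: "mat 1 \<in> Ah" using sgA by (simp add: Ah_def SL_one psl_subgroup_def)

lemma Ah_mult: "a \<in> Ah \<Longrightarrow> b \<in> Ah \<Longrightarrow> a ** b \<in> Ah"
  using sgA by (simp add: Ah_def SL_mult psl_subgroup_def pi_mult[symmetric])

lemma Ah_inv: "a \<in> Ah \<Longrightarrow> matrix_inv a \<in> Ah"
  using sgA by (simp add: Ah_def SL_inv psl_subgroup_def pi_inv[symmetric] SL_invertible)

lemma Ah_xi: "a \<in> Ah \<Longrightarrow> smul (xi TYPE('n) ^ k) a \<in> Ah"
proof -
  assume a: "a \<in> Ah"
  have "pi_n a = pi_n (smul (xi TYPE('n) ^ k) a)" unfolding pi_eq_iff by blast
  with a show ?thesis by (simp add: Ah_def SL_xi)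
qed

lemma A_rep: "X \<in> A \<Longrightarrow> \<exists>a\<in>Ah. X = pi_n a"
  using sgA by (auto simp: psl_subgroup_def PSL_def Ah_def)

lemma Ah_proj: "a \<in> Ah \<Longrightarrow> h \<in> H \<Longrightarrow> \<exists>c. a ** h = smul c (h ** a)"
proof -
  assume a: "a \<in> Ah" and h: "h \<in> H"
  have "pi_n a \<in> Zn H" using a AZ by (auto simp: Ah_def)
  then have "psl_mult (pi_n a) (pi_n h) = psl_mult (pi_n h) (pi_n a)"
    using h by (auto simp: Zn_def psl_centralizer_def)
  then obtain k where "h ** a = smul (xi TYPE('n) ^ k) (a ** h)" unfolding pi_comm by blast
  then show ?thesis using proj_to_chr by blast
qed

lemma Ah_chr: "a \<in> Ah \<Longrightarrow> hasChr H a (chr a)" "a \<in> Ah \<Longrightarrow> \<forall>h\<in>H. chr a h \<noteq> 0"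
  using hasChr_chr[OF Ah_SL HSL] Ah_proj by blast+

lemma schur': "(\<And>h. h \<in> H \<Longrightarrow> x ** h = h ** x) \<Longrightarrow> \<exists>c. x = mat c"
  using schur[OF irr] by blast

lemma same_chr:
  assumes x: "x \<in> SL" and y: "y \<in> SL" and hx: "hasChr H x \<alpha>" and hy: "hasChr H y \<alpha>"
    and nz: "\<forall>h\<in>H. \<alpha> h \<noteq> 0"
  shows "\<exists>k. x = smul (xi TYPE('n) ^ k) y"
proof -
  let ?z = "x ** matrix_inv y"
  have "hasChr H ?z (\<lambda>h. \<alpha> h * inverse (\<alpha> h))"
    by (rule hasChr_mult[OF hx hasChr_inv[OF y hy nz]])
  then have "\<And>h. h \<in> H \<Longrightarrow> ?z ** h = h ** ?z" using nz by (simp add: hasChr_def)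
  then obtain c where c: "?z = mat c" using schur' by blast
  have "det ?z = 1" using x y SL_inv SL_mult by (simp add: SL_def det_mul)
  then have "c ^ CARD('n) = 1" using c by (simp add: det_mat)
  then obtain k where k: "c = xi TYPE('n) ^ k" using root_is_xi_pow by blast
  have "x = ?z ** y" using inv_facts[OF SL_invertible[OF y]] by (simp add: matrix_mul_assoc[symmetric])
  also have "\<dots> = smul c y" by (simp add: c mat_mult_left)
  finally show ?thesis using k by blast
qed

lemma distinct_bound:
  assumes fin: "finite T" and TA: "T \<subseteq> Ah" and inj: "inj_on (\<lambda>a. restrict (chr a) H) T"
  shows "card T \<le> CARD('n \<times> 'n)"
proof -
  define fl where "fl = (\<lambda>M::complex^'n^'n. (\<chi> p. M $ fst p $ snd p) :: complex^('n \<times> 'n))"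
  have injfl: "inj fl" unfolding fl_def by (rule flat_inj)
  have ind: "vec.independent (fl ` T)"
    unfolding vec.independent_explicit_finite_subsets
  proof (intro allI impI ballI)
    fix S u v assume S: "S \<subseteq> fl ` T" "finite S" and su: "(\<Sum>v\<in>S. u v *s v) = 0" and v: "v \<in> S"
    define T0 where "T0 = {M\<in>T. fl M \<in> S}"
    have fT0: "finite T0" using fin by (simp add: T0_def)
    have ST0: "S = fl ` T0" using S by (auto simp: T0_def)
    have "(\<Sum>v\<in>S. u v *s v) = (\<Sum>M\<in>T0. u (fl M) *s fl M)"
      unfolding ST0 by (simp add: sum.reindex[OF inj_on_subset[OF injfl subset_UNIV]] o_def)
    also have "\<dots> = fl (\<Sum>M\<in>T0. smul (u (fl M)) M)"
      unfolding fl_def by (rule flat_lin)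
    finally have "fl (\<Sum>M\<in>T0. smul (u (fl M)) M) = 0" using su by simp
    from flat_zero[OF this[unfolded fl_def]]
    have s0: "(\<Sum>M\<in>T0. smul (u (fl M)) (id M)) = 0" by (simp add: fl_def)
    obtain M0 where M0: "M0 \<in> T0" "v = fl M0" using v ST0 by blast
    have chrs: "\<forall>M\<in>T0. hasChr H (id M) (chr M)" using TA Ah_chr by (auto simp: T0_def)
    have D: "(\<Sum>M\<in>{M\<in>T0. \<forall>h\<in>H. chr M h = chr M0 h}. smul (u (fl M)) (id M)) = 0"
      by (rule dedekind[OF HSL fT0 chrs s0])
    have "{M\<in>T0. \<forall>h\<in>H. chr M h = chr M0 h} = {M0}"
    proof
      show "{M0} \<subseteq> {M\<in>T0. \<forall>h\<in>H. chr M h = chr M0 h}" using M0 by simp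
      show "{M\<in>T0. \<forall>h\<in>H. chr M h = chr M0 h} \<subseteq> {M0}"
      proof
        fix M assume "M \<in> {M\<in>T0. \<forall>h\<in>H. chr M h = chr M0 h}"
        then have "M \<in> T" "M0 \<in> T" "restrict (chr M) H = restrict (chr M0) H"
          using M0 by (auto simp: T0_def restrict_def fun_eq_iff)
        then show "M \<in> {M0}" using inj by (auto dest: inj_onD)
      qed
    qed
    with D have "smul (u (fl M0)) M0 = 0" by simp
    moreover have "M0 \<noteq> 0" using M0 TA SL_nz Ah_SL by (auto simp: T0_def)
    ultimately show "u v = 0" using M0 by (simp add: smul_zero_iff)
  qed
  have "card (fl ` T) \<le> vec.dim (fl ` T)" using vec.independent_bound_general[OF ind] by blast
  also have "\<dots> \<le> CARD('n \<times> 'n)" by (rule dim_subset_UNIV_cart_gen)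
  finally show ?thesis using card_image[OF inj_on_subset[OF injfl]] by simp
qed

lemma Ah_finite: "finite Ah"
proof -
  define \<rho> where "\<rho> a = restrict (chr a) H" for a
  define K where "K = \<rho> ` Ah"
  define r where "r \<kappa> = (SOME a. a \<in> Ah \<and> \<rho> a = \<kappa>)" for \<kappa>
  have r: "r \<kappa> \<in> Ah \<and> \<rho> (r \<kappa>) = \<kappa>" if kK: "\<kappa> \<in> K" for \<kappa>
  proof -
    obtain x where x: "x \<in> Ah" "\<kappa> = \<rho> x" using kK K_def by blast
    show ?thesis unfolding r_def using someI[of "\<lambda>a. a \<in> Ah \<and> \<rho> a = \<kappa>" x] x by blast
  qed
  have finK: "finite K"
  proof (rule ccontr)
    assume "infinite K"
    then obtain K0 where K0: "finite K0" "card K0 = Suc (CARD('n \<times> 'n))" "K0 \<subseteq> K"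
      using infinite_arbitrarily_large by blast
    have injr: "inj_on r K0" using r K0(3) by (metis inj_onI subsetD)
    have "card (r ` K0) \<le> CARD('n \<times> 'n)"
    proof (rule distinct_bound)
      show "finite (r ` K0)" using K0 by simp
      show "r ` K0 \<subseteq> Ah" using r K0 by auto
      show "inj_on (\<lambda>a. restrict (chr a) H) (r ` K0)"
      proof (rule inj_onI)
        fix x y assume xy: "x \<in> r ` K0" "y \<in> r ` K0" "restrict (chr x) H = restrict (chr y) H"
        then obtain a b where ab: "a \<in> K0" "b \<in> K0" "x = r a" "y = r b" by blast
        then have "a = \<rho> x" "b = \<rho> y" using r K0(3) by auto
        then have "a = b" using xy(3) \<rho>_def by simp
        then show "x = y" using ab by simp
      qed
    qed
    then show False using K0 card_image[OF injr] by simp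
  qed
  have "Ah \<subseteq> (\<lambda>(c, b). smul c b) ` ({c. c ^ CARD('n) = 1} \<times> r ` K)"
  proof
    fix a assume a: "a \<in> Ah"
    let ?b = "r (\<rho> a)"
    have b: "?b \<in> Ah" "\<rho> ?b = \<rho> a" using r a K_def by auto
    have "\<forall>h\<in>H. chr ?b h = chr a h" using b(2) unfolding \<rho>_def by (metis restrict_apply')
    then have "hasChr H ?b (chr a)" using Ah_chr(1)[OF b(1)] by (simp add: hasChr_def)
    then obtain k where k: "a = smul (xi TYPE('n) ^ k) ?b"
      using same_chr[OF Ah_SL[OF a] Ah_SL[OF b(1)] Ah_chr(1)[OF a] _ Ah_chr(2)[OF a]] by blast
    have "(xi TYPE('n) ^ k, ?b) \<in> {c. c ^ CARD('n) = 1} \<times> r ` K"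
      using a K_def xi_pow_n by auto
    then show "a \<in> (\<lambda>(c, b). smul c b) ` ({c. c ^ CARD('n) = 1} \<times> r ` K)"
      using k by force
  qed
  moreover have "finite {c::complex. c ^ CARD('n) = 1}" by (intro finite_roots_unity) simp
  ultimately show ?thesis using finK by (meson finite_SigmaI finite_imageI finite_subset)
qed

end

lemma add_mult_right: "(A + B) ** (C::complex^'n^'n) = A ** C + B ** C"
  by (simp add: vec_eq_iff matrix_matrix_mult_def distrib_right sum.distrib)

lemma add_mult_left: "C ** (A + B) = C ** A + C ** (B::complex^'n^'n)"
  by (rule matrix_add_ldistrib)

lemma smul_add: "smul c (A + B) = smul c A + smul c (B::complex^'n^'n)"
  by (simp add: vec_eq_iff distrib_left)

lemma smul_cancel: "c \<noteq> 0 \<Longrightarrow> smul c A = smul c B \<Longrightarrow> A = (B::complex^'n^'n)"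
  by (simp add: vec_eq_iff)

lemma aux1:
  fixes a b x l t1 t2 :: complex
  assumes "a + t1*x = l*(b + t1*x)" "a + t2*x = l*(b + t2*x)"
  shows "(t1 - t2)*x = l*((t1-t2)*x)"
proof -
  have "(a + t1*x) - (a + t2*x) = l*(b + t1*x) - l*(b + t2*x)" using assms by simp
  then show ?thesis by (simp add: algebra_simps)
qed

lemma aux2:
  fixes a b x l1 l2 t1 t2 :: complex
  assumes "a + t1*x = l1*(b + t1*x)" "a + t2*x = l2*(b + t2*x)"
  shows "(l1 - l2)*b = ((l2-1)*t2 - (l1-1)*t1)*x"
proof -
  have "a = l1*(b + t1*x) - t1*x" using assms(1) by (simp add: eq_diff_eq)
  moreover have "a = l2*(b + t2*x) - t2*x" using assms(2) by (simp add: eq_diff_eq)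
  ultimately have "l1*(b + t1*x) - t1*x = l2*(b + t2*x) - t2*x" by simp
  then show ?thesis by (simp add: algebra_simps)
qed

lemma invertible_shift:
  fixes m :: "complex^'n^'n"
  defines "K \<equiv> (\<Sum>i\<in>UNIV. \<Sum>j\<in>UNIV. norm (m$i$j))"
  assumes t: "K < norm t"
  shows "invertible (m + mat t)"
proof (rule ccontr)
  assume "\<not> invertible (m + mat t)"
  then have "\<not> (\<exists>B. B ** (m + mat t) = mat 1)" using invertible_left_inverse by blast
  then obtain v where v: "(m + mat t) *v v = 0" "v \<noteq> 0" using matrix_left_invertible_ker by blast
  define M where "M = Max (range (\<lambda>j. norm (v$j)))"
  have "M \<in> range (\<lambda>j. norm (v$j))" unfolding M_def by (rule Max_in) auto
  then obtain j0 where j0: "norm (v$j0) = M" by auto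
  have Mge: "norm (v$j) \<le> M" for j using M_def by (simp add: Max_ge)
  obtain j1 where "v$j1 \<noteq> 0" using v(2) by (metis vec_eq_iff zero_index)
  then have "0 < norm (v$j1)" by simp
  then have Mpos: "M > 0" using Mge[of j1] by linarith
  have "(m *v v) + t *s v = 0" using v(1) by (simp add: matrix_vector_mult_add_rdistrib mat_mv)
  then have e: "(m *v v)$j0 = - t * v$j0" by (simp add: vec_eq_iff eq_neg_iff_add_eq_0)
  have "norm t * M = norm ((m *v v)$j0)" using e j0 by (simp add: norm_mult)
  also have "\<dots> = norm (\<Sum>j\<in>UNIV. m$j0$j * v$j)" by (simp add: matrix_vector_mult_def)
  also have "\<dots> \<le> (\<Sum>j\<in>UNIV. norm (m$j0$j) * norm (v$j))" by (rule order_trans[OF norm_sum]) (simp add: norm_mult)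
  also have "\<dots> \<le> (\<Sum>j\<in>UNIV. norm (m$j0$j) * M)" by (intro sum_mono mult_left_mono Mge) auto
  also have "\<dots> = (\<Sum>j\<in>UNIV. norm (m$j0$j)) * M" by (simp add: sum_distrib_right)
  also have "\<dots> \<le> K * M"
  proof -
    have "(\<Sum>j\<in>UNIV. norm (m$j0$j)) \<le> K" unfolding K_def
      by (rule member_le_sum[of j0 UNIV "\<lambda>i. \<Sum>j\<in>UNIV. norm (m$i$j)"]) (auto intro: sum_nonneg)
    then show ?thesis using Mpos by simp
  qed
  finally have "norm t \<le> K" using Mpos by simp
  then show False using t by simp
qed

context thm_setup
begin

abbreviation "Zc \<equiv> psl_centralizer A"

lemma avg_comm:
  assumes b: "b \<in> Ah"
  shows "(\<Sum>a\<in>Ah. a ** y ** matrix_inv a) ** b = b ** (\<Sum>a\<in>Ah. a ** y ** matrix_inv a)"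
proof -
  let ?m = "\<Sum>a\<in>Ah. a ** y ** matrix_inv a"
  have bSL: "b \<in> SL" using b Ah_SL by blast
  have bi: "b ** matrix_inv b = mat 1" "matrix_inv b ** b = mat 1" using inv_facts SL_invertible[OF bSL] by auto
  have inj: "inj_on (\<lambda>a. b ** a) Ah"
  proof (rule inj_onI)
    fix x z assume "b ** x = b ** z"
    then have "matrix_inv b ** (b ** x) = matrix_inv b ** (b ** z)" by simp
    then show "x = z" by (simp add: matrix_mul_assoc bi)
  qed
  have img: "(\<lambda>a. b ** a) ` Ah = Ah"
  proof
    show "(\<lambda>a. b ** a) ` Ah \<subseteq> Ah" using Ah_mult b by auto
    show "Ah \<subseteq> (\<lambda>a. b ** a) ` Ah"
    proof
      fix a assume a: "a \<in> Ah"
      have "a = b ** (matrix_inv b ** a)" by (simp add: matrix_mul_assoc bi)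
      moreover have "matrix_inv b ** a \<in> Ah" using Ah_mult Ah_inv a b by blast
      ultimately show "a \<in> (\<lambda>a. b ** a) ` Ah" by blast
    qed
  qed
  have "b ** ?m ** matrix_inv b = (\<Sum>a\<in>Ah. (b ** a) ** y ** matrix_inv (b ** a))"
    unfolding sum_mult_left sum_mult_right
  proof (intro sum.cong refl)
    fix a assume a: "a \<in> Ah"
    have "matrix_inv (b ** a) = matrix_inv a ** matrix_inv b" using inv_mult bSL Ah_SL a by blast
    then show "b ** (a ** y ** matrix_inv a) ** matrix_inv b = b ** a ** y ** matrix_inv (b ** a)"
      by (simp add: matrix_mul_assoc)
  qed
  also have "\<dots> = (\<Sum>a\<in>(\<lambda>a. b ** a) ` Ah. a ** y ** matrix_inv a)"
    by (simp add: sum.reindex[OF inj] o_def)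
  also have "\<dots> = ?m" using img by simp
  finally have "b ** ?m ** matrix_inv b = ?m" .
  then have "b ** ?m ** matrix_inv b ** b = ?m ** b" by simp
  then show ?thesis by (simp add: matrix_mul_assoc[symmetric] bi)
qed

lemma Zc_of_comm:
  assumes "u \<in> SL" "\<forall>b\<in>Ah. u ** b = b ** u"
  shows "pi_n u \<in> Zc"
proof -
  have "pi_n u \<in> PSL" using assms(1) by (simp add: PSL_def)
  moreover have "\<forall>Y\<in>A. psl_mult (pi_n u) Y = psl_mult Y (pi_n u)"
  proof
    fix Y assume "Y \<in> A"
    then obtain b where b: "b \<in> Ah" "Y = pi_n b" using A_rep by blast
    show "psl_mult (pi_n u) Y = psl_mult Y (pi_n u)" using b assms(2) by (simp add: pi_mult)
  qed
  ultimately show ?thesis by (simp add: psl_centralizer_def)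
qed

lemma H_in_Zc: "h \<in> H \<Longrightarrow> pi_n h \<in> Zc"
proof -
  assume h: "h \<in> H"
  have "pi_n h \<in> PSL" using h HSL by (auto simp: PSL_def)
  moreover have "\<forall>X\<in>A. psl_mult (pi_n h) X = psl_mult X (pi_n h)"
    using AZ h by (auto simp: Zn_def psl_centralizer_def)
  ultimately show ?thesis by (simp add: psl_centralizer_def)
qed

lemma ZZ_comm: "pi_n g \<in> psl_centralizer Zc \<Longrightarrow> Y \<in> Zc \<Longrightarrow> psl_mult (pi_n g) Y = psl_mult Y (pi_n g)"
  by (simp add: psl_centralizer_def)

lemma comm_shift:
  assumes g: "g \<in> SL" and gZ: "pi_n g \<in> psl_centralizer Zc"
    and m: "\<forall>b\<in>Ah. m ** b = b ** m" and t: "invertible (m + mat t)"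
  shows "\<exists>l. (m + mat t) ** g = smul l (g ** (m + mat t))"
proof -
  let ?x = "m + mat t"
  have w: "det ?x \<noteq> 0" using t invertible_det_nz by blast
  obtain c where c: "c ^ CARD('n) = inverse (det ?x)" using nth_root_exists[of "inverse (det ?x)" "CARD('n)"] w by auto
  have c0: "c \<noteq> 0"
  proof
    assume "c = 0"
    then have "inverse (det ?x) = 0" using c card_pos[where 'n='n] by (simp add: zero_power)
    then show False using w by simp
  qed
  let ?u = "smul c ?x"
  have uSL: "?u \<in> SL" using c w by (simp add: SL_def det_smul)
  have "\<forall>b\<in>Ah. ?u ** b = b ** ?u"
  proof
    fix b assume b: "b \<in> Ah"
    have "?x ** b = b ** ?x" using m b by (simp add: add_mult_right add_mult_left mat_mult_left mat_mult_right)
    then show "?u ** b = b ** ?u" by (simp add: smul_mult_left smul_mult_right)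
  qed
  then have "pi_n ?u \<in> Zc" using Zc_of_comm uSL by blast
  then have "psl_mult (pi_n g) (pi_n ?u) = psl_mult (pi_n ?u) (pi_n g)" using ZZ_comm gZ by blast
  then obtain k where "?u ** g = smul (xi TYPE('n) ^ k) (g ** ?u)" unfolding pi_comm by blast
  then have "smul c (?x ** g) = smul c (smul (xi TYPE('n) ^ k) (g ** ?x))"
    by (simp add: smul_mult_left smul_mult_right mult.commute)
  then show ?thesis using smul_cancel[OF c0] by blast
qed

lemma g_comm:
  assumes g: "g \<in> SL" and gZ: "pi_n g \<in> psl_centralizer Zc"
    and m: "\<forall>b\<in>Ah. m ** b = b ** m"
  shows "g ** m = m ** g"
proof -
  define K where "K = (\<Sum>i\<in>UNIV. \<Sum>j\<in>UNIV. norm (m$i$j))"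
  have K0: "K \<ge> 0" unfolding K_def by (intro sum_nonneg) auto
  define t1 where "t1 = complex_of_real (K + 1)"
  define t2 where "t2 = complex_of_real (K + 2)"
  have "invertible (m + mat t1)" using invertible_shift[of m t1] K0 unfolding K_def[symmetric] t1_def by simp
  then obtain l1 where l1: "(m + mat t1) ** g = smul l1 (g ** (m + mat t1))" using comm_shift[OF g gZ m] by blast
  have "invertible (m + mat t2)" using invertible_shift[of m t2] K0 unfolding K_def[symmetric] t2_def by simp
  then obtain l2 where l2: "(m + mat t2) ** g = smul l2 (g ** (m + mat t2))" using comm_shift[OF g gZ m] by blast
  have t12: "t1 \<noteq> t2" by (simp add: t1_def t2_def)
  have e1: "\<And>i j. (m ** g)$i$j + t1 * g$i$j = l1 * ((g ** m)$i$j + t1 * g$i$j)"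
    using l1 by (simp add: vec_eq_iff add_mult_right add_mult_left mat_mult_left mat_mult_right)
  have e2: "\<And>i j. (m ** g)$i$j + t2 * g$i$j = l2 * ((g ** m)$i$j + t2 * g$i$j)"
    using l2 by (simp add: vec_eq_iff add_mult_right add_mult_left mat_mult_left mat_mult_right)
  obtain i0 j0 where gij: "g$i0$j0 \<noteq> 0" using SL_nz[OF g] by (metis vec_eq_iff zero_index)
  show ?thesis
  proof (cases "l1 = l2")
    case True
    have "(t1 - t2) * g$i0$j0 = l1 * ((t1 - t2) * g$i0$j0)"
      using aux1[OF e1[of i0 j0] e2[of i0 j0, folded True]] .
    then have "l1 = 1" using t12 gij by simp
    then show ?thesis using e1 by (simp add: vec_eq_iff)
  next
    case False
    define s where "s = ((l2 - 1) * t2 - (l1 - 1) * t1) / (l1 - l2)"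
    have "\<And>i j. (g ** m)$i$j = s * g$i$j"
    proof -
      fix i j
      have "(l1 - l2) * (g ** m)$i$j = ((l2 - 1) * t2 - (l1 - 1) * t1) * g$i$j"
        by (rule aux2[OF e1[of i j] e2[of i j]])
      then show "(g ** m)$i$j = s * g$i$j" using False unfolding s_def by (simp add: field_simps)
    qed
    then have gm: "g ** m = smul s g" by (simp add: vec_eq_iff)
    have gi: "matrix_inv g ** g = mat 1" using inv_facts SL_invertible[OF g] by auto
    have "m = matrix_inv g ** (g ** m)" by (simp add: matrix_mul_assoc gi)
    also have "\<dots> = mat s" by (simp add: gm smul_mult_right gi smul_mat)
    finally show ?thesis by (simp add: mat_mult_left mat_mult_right)
  qed
qed

end

lemma elem_mult:
  fixes a B :: "complex^'n^'n"
  shows "(a ** (\<chi> r s. if r = i \<and> s = j then 1 else 0) ** B) $ p $ q = a$p$i * B$j$q"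
proof -
  have "(a ** (\<chi> r s. if r = i \<and> s = j then 1 else 0)) = (\<chi> r s. if s = j then a$r$i else 0)"
    by (simp add: vec_eq_iff matrix_matrix_mult_def if_distrib if_distribR sum.delta' cong: if_cong)
  then show ?thesis
    by (simp add: matrix_matrix_mult_def if_distrib if_distribR sum.delta cong: if_cong)
qed

context thm_setup
begin

lemma main:
  assumes g: "g \<in> SL" and gZ: "pi_n g \<in> psl_centralizer Zc"
  shows "pi_n g \<in> A"
proof (rule ccontr)
  assume notA: "pi_n g \<notin> A"
  have gproj: "\<forall>h\<in>H. \<exists>c. g ** h = smul c (h ** g)"
  proof
    fix h assume h: "h \<in> H"
    have "psl_mult (pi_n g) (pi_n h) = psl_mult (pi_n h) (pi_n g)" using ZZ_comm[OF gZ H_in_Zc[OF h]] .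
    then obtain k where "h ** g = smul (xi TYPE('n) ^ k) (g ** h)" unfolding pi_comm by blast
    then show "\<exists>c. g ** h = smul c (h ** g)" using proj_to_chr by blast
  qed
  have gchr: "hasChr H g (chr g)" "\<forall>h\<in>H. chr g h \<noteq> 0" using hasChr_chr[OF g HSL gproj] by auto
  obtain i0 :: 'n where True by blast
  define L where "L = (\<Sum>a\<in>Ah. smul (a$i0$i0) (matrix_inv a ** g))"
  define R where "R = (\<Sum>a\<in>Ah. smul ((g ** a)$i0$i0) (matrix_inv a))"
  have LR: "L = R"
  proof -
    have "L $ j $ q = R $ j $ q" for j q
    proof -
      define E where "E = ((\<chi> r s. if r = i0 \<and> s = j then 1 else 0) :: complex^'n^'n)"
      define m where "m = (\<Sum>a\<in>Ah. a ** E ** matrix_inv a)"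
      have "g ** m = m ** g" unfolding m_def by (rule g_comm[OF g gZ]) (simp add: avg_comm)
      then have "(m ** g) $ i0 $ q = (g ** m) $ i0 $ q" by simp
      moreover have "(m ** g) $ i0 $ q = L $ j $ q"
        unfolding m_def L_def sum_mult_right sum_nth2
      proof (intro sum.cong refl)
        fix a
        have "a ** E ** matrix_inv a ** g = a ** E ** (matrix_inv a ** g)" by (simp only: matrix_mul_assoc)
        then show "(a ** E ** matrix_inv a ** g) $ i0 $ q = smul (a $ i0 $ i0) (matrix_inv a ** g) $ j $ q"
          unfolding E_def by (simp add: elem_mult)
      qed
      moreover have "(g ** m) $ i0 $ q = R $ j $ q"
        unfolding m_def R_def sum_mult_left sum_nth2 E_def
        by (intro sum.cong refl) (simp add: matrix_mul_assoc elem_mult)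
      ultimately show ?thesis by simp
    qed
    then show ?thesis by (simp add: vec_eq_iff)
  qed
  define I where "I = Ah <+> Ah"
  define f :: "(complex^'n^'n + complex^'n^'n) \<Rightarrow> complex^'n^'n" where "f x = (case x of Inl a \<Rightarrow> matrix_inv a ** g | Inr a \<Rightarrow> matrix_inv a)" for x
  define c :: "(complex^'n^'n + complex^'n^'n) \<Rightarrow> complex" where "c x = (case x of Inl a \<Rightarrow> a$i0$i0 | Inr a \<Rightarrow> - (g ** a)$i0$i0)" for x
  define \<gamma> :: "(complex^'n^'n + complex^'n^'n) \<Rightarrow> complex^'n^'n \<Rightarrow> complex" where "\<gamma> x = (case x of Inl a \<Rightarrow> (\<lambda>h. inverse (chr a h) * chr g h) | Inr a \<Rightarrow> (\<lambda>h. inverse (chr a h)))" for x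
  have fin: "finite I" using Ah_finite by (simp add: I_def)
  have chrs: "\<forall>x\<in>I. hasChr H (f x) (\<gamma> x)"
  proof
    fix x assume "x \<in> I"
    then obtain a where a: "a \<in> Ah" "x = Inl a \<or> x = Inr a" by (auto simp: I_def)
    have ia: "hasChr H (matrix_inv a) (\<lambda>h. inverse (chr a h))"
      by (rule hasChr_inv[OF Ah_SL[OF a(1)] Ah_chr(1)[OF a(1)] Ah_chr(2)[OF a(1)]])
    show "hasChr H (f x) (\<gamma> x)"
      using a(2) hasChr_mult[OF ia gchr(1)] ia by (auto simp: f_def \<gamma>_def)
  qed
  have sum0: "(\<Sum>x\<in>I. smul (c x) (f x)) = 0"
  proof -
    have "(\<Sum>x\<in>I. smul (c x) (f x)) = L + (\<Sum>a\<in>Ah. smul (- (g ** a)$i0$i0) (matrix_inv a))"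
      unfolding I_def L_def using Ah_finite by (simp add: sum.Plus o_def f_def c_def)
    also have "(\<Sum>a\<in>Ah. smul (- (g ** a)$i0$i0) (matrix_inv a)) = - R"
      unfolding R_def by (simp add: vec_eq_iff sum_nth2 sum_negf)
    finally show ?thesis using LR by simp
  qed
  have D: "(\<Sum>x\<in>{x\<in>I. \<forall>h\<in>H. \<gamma> x h = chr g h}. smul (c x) (f x)) = 0"
    by (rule dedekind[OF HSL fin chrs sum0])
  define S1 where "S1 = {a\<in>Ah. \<forall>h\<in>H. chr a h = 1}"
  have setEq: "{x\<in>I. \<forall>h\<in>H. \<gamma> x h = chr g h} = Inl ` S1"
  proof
    show "Inl ` S1 \<subseteq> {x\<in>I. \<forall>h\<in>H. \<gamma> x h = chr g h}"
      by (auto simp: S1_def I_def \<gamma>_def)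
    show "{x\<in>I. \<forall>h\<in>H. \<gamma> x h = chr g h} \<subseteq> Inl ` S1"
    proof
      fix x assume x: "x \<in> {x\<in>I. \<forall>h\<in>H. \<gamma> x h = chr g h}"
      then obtain a where a: "a \<in> Ah" "x = Inl a \<or> x = Inr a" by (auto simp: I_def)
      show "x \<in> Inl ` S1"
      proof (cases "x = Inl a")
        case True
        have "\<forall>h\<in>H. chr a h = 1"
        proof
          fix h assume h: "h \<in> H"
          have "inverse (chr a h) * chr g h = chr g h" using x True h by (simp add: \<gamma>_def)
          then show "chr a h = 1" using gchr(2) h Ah_chr(2)[OF a(1)] by (simp add: field_simps)
        qed
        then show ?thesis using True a by (auto simp: S1_def)
      next
        case False
        then have xr: "x = Inr a" using a by blast
        have hinv: "\<forall>h\<in>H. inverse (chr a h) = chr g h" using x xr by (simp add: \<gamma>_def)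
        have ia: "hasChr H (matrix_inv a) (chr g)"
          using hasChr_inv[OF Ah_SL[OF a(1)] Ah_chr(1)[OF a(1)] Ah_chr(2)[OF a(1)]] hinv
          by (simp add: hasChr_def)
        obtain k where "g = smul (xi TYPE('n) ^ k) (matrix_inv a)"
          using same_chr[OF g SL_inv[OF Ah_SL[OF a(1)]] gchr(1) ia gchr(2)] by blast
        then have "pi_n g = pi_n (matrix_inv a)" using pi_eq_iff[of "matrix_inv a" g] by auto
        then have "pi_n g \<in> A" using Ah_inv[OF a(1)] by (simp add: Ah_def)
        then show ?thesis using notA by blast
      qed
    qed
  qed
  have terms: "smul (c (Inl a)) (f (Inl a)) = g" if a: "a \<in> S1" for a
  proof -
    have aAh: "a \<in> Ah" using a by (simp add: S1_def)
    have "\<And>h. h \<in> H \<Longrightarrow> a ** h = h ** a"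
      using a Ah_chr(1)[OF aAh] by (simp add: S1_def hasChr_def)
    then obtain d where d: "a = mat d" using schur' by blast
    have "d ^ CARD('n) = 1" using Ah_SL[OF aAh] d by (simp add: SL_def det_mat)
    then have d0: "d \<noteq> 0" using card_pos[where 'n='n] by (auto simp: zero_power)
    have "matrix_inv a = mat (inverse d)"
      unfolding d by (rule matrix_inv_unique) (simp add: mat_mult_left smul_mat d0)
    moreover have "mat d $ i0 $ i0 = d" by (simp add: mat_def)
    ultimately show ?thesis using d0 by (simp add: c_def f_def d mat_mult_left)
  qed
  have "(\<Sum>x\<in>Inl ` S1. smul (c x) (f x)) = (\<Sum>a\<in>S1. g)"
    by (simp add: sum.reindex o_def terms)
  with D setEq have sumg: "(\<Sum>a\<in>S1. g) = 0" by simp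
  have finS1: "finite S1" using Ah_finite by (simp add: S1_def)
  have "mat 1 \<in> S1"
  proof -
    have "chr (mat 1) h = 1" if "h \<in> H" for h
    proof -
      have hS: "h \<in> SL" using that HSL by blast
      have "mat 1 ** h = smul 1 (h ** mat 1)" by simp
      then show ?thesis using chr_unique[OF SL_one hS] by blast
    qed
    then show ?thesis using Ah_one by (simp add: S1_def)
  qed
  then have "card S1 \<noteq> 0" using finS1 by auto
  obtain p q where "g$p$q \<noteq> 0" using SL_nz[OF g] by (metis vec_eq_iff zero_index)
  moreover have "(\<Sum>a\<in>S1. g $ p $ q) = 0"
    using arg_cong[OF sumg, of "\<lambda>M. M $ p $ q"] by (simp only: sum_nth2 zero_index)
  then have "of_nat (card S1) * g$p$q = 0" by simp
  ultimately show False using \<open>card S1 \<noteq> 0\<close> by simp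
qed

end

context thm_setup
begin

lemma Zc_rep: "X \<in> Zc \<Longrightarrow> \<exists>x\<in>SL. X = pi_n x"
  by (auto simp: psl_centralizer_def PSL_def)

lemma Zc_comm: "pi_n x \<in> Zc \<Longrightarrow> a \<in> Ah \<Longrightarrow> pi_n (x ** a) = pi_n (a ** x)"
proof -
  assume "pi_n x \<in> Zc" "a \<in> Ah"
  then have "psl_mult (pi_n x) (pi_n a) = psl_mult (pi_n a) (pi_n x)"
    by (auto simp: psl_centralizer_def Ah_def)
  then show ?thesis by (simp add: pi_mult)
qed

lemma Zc_memI: "x \<in> SL \<Longrightarrow> (\<And>a. a \<in> Ah \<Longrightarrow> pi_n (x ** a) = pi_n (a ** x)) \<Longrightarrow> pi_n x \<in> Zc"
proof -
  assume x: "x \<in> SL" and c: "\<And>a. a \<in> Ah \<Longrightarrow> pi_n (x ** a) = pi_n (a ** x)"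
  have "pi_n x \<in> PSL" using x by (simp add: PSL_def)
  moreover have "\<forall>Y\<in>A. psl_mult (pi_n x) Y = psl_mult Y (pi_n x)"
  proof
    fix Y assume "Y \<in> A"
    then obtain b where b: "b \<in> Ah" "Y = pi_n b" using A_rep by blast
    show "psl_mult (pi_n x) Y = psl_mult Y (pi_n x)" using b c by (simp add: pi_mult)
  qed
  ultimately show ?thesis by (simp add: psl_centralizer_def)
qed

lemma Zc_sub: "psl_subgroup Zc"
  unfolding psl_subgroup_def
proof (intro conjI ballI)
  show "Zc \<subseteq> PSL" by (auto simp: psl_centralizer_def)
  show "pi_n (mat 1) \<in> Zc" by (rule Zc_memI[OF SL_one]) simp
next
  fix X Y assume X: "X \<in> Zc" and Y: "Y \<in> Zc"
  obtain x where x: "x \<in> SL" "X = pi_n x" using Zc_rep X by blast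
  obtain y where y: "y \<in> SL" "Y = pi_n y" using Zc_rep Y by blast
  have "pi_n (x ** y) \<in> Zc"
  proof (rule Zc_memI[OF SL_mult[OF x(1) y(1)]])
    fix a assume a: "a \<in> Ah"
    have cx: "pi_n (x ** a) = pi_n (a ** x)" using Zc_comm X x a by blast
    have cy: "pi_n (y ** a) = pi_n (a ** y)" using Zc_comm Y y a by blast
    have "pi_n (x ** y ** a) = psl_mult (pi_n x) (pi_n (y ** a))" by (simp add: pi_mult matrix_mul_assoc)
    also have "\<dots> = psl_mult (pi_n x) (pi_n (a ** y))" using cy by simp
    also have "\<dots> = psl_mult (pi_n (x ** a)) (pi_n y)" by (simp add: pi_mult matrix_mul_assoc)
    also have "\<dots> = psl_mult (pi_n (a ** x)) (pi_n y)" using cx by simp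
    also have "\<dots> = pi_n (a ** (x ** y))" by (simp add: pi_mult matrix_mul_assoc)
    finally show "pi_n (x ** y ** a) = pi_n (a ** (x ** y))" .
  qed
  then show "psl_mult X Y \<in> Zc" using x y by (simp add: pi_mult)
next
  fix X assume X: "X \<in> Zc"
  obtain x where x: "x \<in> SL" "X = pi_n x" using Zc_rep X by blast
  have xi: "x ** matrix_inv x = mat 1" "matrix_inv x ** x = mat 1" using inv_facts SL_invertible[OF x(1)] by auto
  have "pi_n (matrix_inv x) \<in> Zc"
  proof (rule Zc_memI[OF SL_inv[OF x(1)]])
    fix a assume a: "a \<in> Ah"
    have "pi_n (x ** a) = pi_n (a ** x)" using Zc_comm X x a by blast
    then obtain k where k: "a ** x = smul (xi TYPE('n) ^ k) (x ** a)" unfolding pi_eq_iff by blast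
    have "matrix_inv x ** a = matrix_inv x ** (a ** x) ** matrix_inv x"
      by (simp add: matrix_mul_assoc[symmetric] xi)
    also have "\<dots> = smul (xi TYPE('n) ^ k) (a ** matrix_inv x)"
      by (simp add: k smul_mult_left smul_mult_right matrix_mul_assoc xi)
    finally have "matrix_inv x ** a = smul (xi TYPE('n) ^ k) (a ** matrix_inv x)" .
    then show "pi_n (matrix_inv x ** a) = pi_n (a ** matrix_inv x)"
      using pi_eq_iff[of "a ** matrix_inv x" "matrix_inv x ** a"] by auto
  qed
  then show "psl_inv X \<in> Zc" using x by (simp add: pi_inv SL_invertible)
qed

lemma Zc_irr: "irreducible_psl Zc"
proof -
  have sub: "H \<subseteq> {g \<in> SL. pi_n g \<in> Zc}" using HSL H_in_Zc by auto
  show ?thesis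
    unfolding irreducible_psl_def irreducible_sl_def
  proof (intro allI impI)
    fix W :: "(complex^'n) set"
    assume W: "vec.subspace W \<and> W \<noteq> {0} \<and> W \<noteq> UNIV"
    then have "\<not> (\<forall>h\<in>H. (\<lambda>v. h *v v) ` W \<subseteq> W)" using irr unfolding irreducible_sl_def by blast
    then show "\<not> (\<forall>h\<in>{g \<in> SL. pi_n g \<in> Zc}. (\<lambda>v. h *v v) ` W \<subseteq> W)" using sub by blast
  qed
qed

lemma ZZ: "psl_centralizer Zc = A"
proof
  show "psl_centralizer Zc \<subseteq> A"
  proof
    fix X assume X: "X \<in> psl_centralizer Zc"
    then obtain g where g: "g \<in> SL" "X = pi_n g" by (auto simp: psl_centralizer_def PSL_def)
    then show "X \<in> A" using main X by blast
  qed
  show "A \<subseteq> psl_centralizer Zc"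
    using sgA by (auto simp: psl_centralizer_def psl_subgroup_def)
qed

end

theorem mainTheorem6:
  fixes H :: "(complex^'n^'n) set"
    and A :: "((complex^'n^'n) set) set"
  assumes "sl_subgroup H" and "irreducible_sl H"
    and "psl_subgroup A" and "A \<subseteq> Zn H"
  shows "psl_centralizer (psl_centralizer A) = A \<and>
         (\<exists>B. psl_subgroup B \<and> irreducible_psl B \<and> psl_centralizer B = A)"
proof -
  interpret thm_setup H A using assms by unfold_locales
  show ?thesis using ZZ Zc_sub Zc_irr by blast
qed

end
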